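(* Let $R$ be a commutative ring with $1$ and $M$ a finitely generated flat $R$-module. Then the annihilator $\operatorname{Ann}_R(M)$ is a pure ideal of $R$.
   Context: An ideal $I$ of a commutative ring $R$ is called pure if the canonical ring map $R\to R/I$ is flat, i.e. $R/I$ is a flat $R$-module. *)

theory Defs
  imports Complex_Main
begin

text \<open>
  We treat modules of the form N = 'm / K for an R-submodule K of 'm; in particular
  M = 'm / {0} and R / I = 'a / I (with scale = (*)).

  Tensor products J \<otimes>_R N (J an ideal of R) are built concretely: formal finite
  Z-linear combinations of pairs (j, m) with j in J (functions 'a \<times> 'm \<Rightarrow> int with finite
  support in J \<times> UNIV), modulo the subgroup generated by the bilinearity / balancing
  relations and by the pairs (j, k) with k in K (which are zero in N = 'm / K).
\<close>

definition delta :: "'x \<Rightarrow> 'x \<Rightarrow> int" where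
  "delta p = (\<lambda>q. if q = p then 1 else 0)"

definition ideal :: "'a::comm_ring_1 set \<Rightarrow> bool" where
  "ideal J \<longleftrightarrow> module.subspace ((*) :: 'a \<Rightarrow> 'a \<Rightarrow> 'a) J"

definition tensor_gens ::
  "'a::comm_ring_1 set \<Rightarrow> ('a \<Rightarrow> 'm::ab_group_add \<Rightarrow> 'm) \<Rightarrow> 'm set \<Rightarrow> ('a \<times> 'm \<Rightarrow> int) set" where
  "tensor_gens J scale K =
     {(\<lambda>q. delta (j + j', m) q - delta (j, m) q - delta (j', m) q) | j j' m. j \<in> J \<and> j' \<in> J}
   \<union> {(\<lambda>q. delta (j, m + m') q - delta (j, m) q - delta (j, m') q) | j m m'. j \<in> J}
   \<union> {(\<lambda>q. delta (r * j, m) q - delta (j, scale r m) q) | r j m. j \<in> J}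
   \<union> {delta (j, k) | j k. j \<in> J \<and> k \<in> K}"

inductive_set tensor_rel ::
  "'a::comm_ring_1 set \<Rightarrow> ('a \<Rightarrow> 'm::ab_group_add \<Rightarrow> 'm) \<Rightarrow> 'm set \<Rightarrow> ('a \<times> 'm \<Rightarrow> int) set"
  for J scale K where
  gen: "g \<in> tensor_gens J scale K \<Longrightarrow> g \<in> tensor_rel J scale K"
| zero: "(\<lambda>_. 0) \<in> tensor_rel J scale K"
| diff: "x \<in> tensor_rel J scale K \<Longrightarrow> y \<in> tensor_rel J scale K \<Longrightarrow> (\<lambda>q. x q - y q) \<in> tensor_rel J scale K"

text \<open>Image in 'm (representative in N = 'm / K) of a formal sum under j \<otimes> m \<mapsto> j m.\<close>
definition tensor_eval ::
  "('a::comm_ring_1 \<Rightarrow> 'm::ab_group_add \<Rightarrow> 'm) \<Rightarrow> ('a \<times> 'm \<Rightarrow> int) \<Rightarrow> 'm" where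
  "tensor_eval scale f = (\<Sum>p\<in>{p. f p \<noteq> 0}. scale (of_int (f p) * fst p) (snd p))"

text \<open>The R-module 'm / K is flat: for every ideal J of R the canonical map
  J \<otimes>_R ('m / K) \<rightarrow> 'm / K is injective.\<close>
definition flat_quot :: "('a::comm_ring_1 \<Rightarrow> 'm::ab_group_add \<Rightarrow> 'm) \<Rightarrow> 'm set \<Rightarrow> bool" where
  "flat_quot scale K \<longleftrightarrow>
     (\<forall>J. ideal J \<longrightarrow>
        (\<forall>f :: 'a \<times> 'm \<Rightarrow> int. finite {p. f p \<noteq> 0} \<and> {p. f p \<noteq> 0} \<subseteq> J \<times> UNIV
           \<and> tensor_eval scale f \<in> K \<longrightarrow> f \<in> tensor_rel J scale K))"

definition flat_module :: "('a::comm_ring_1 \<Rightarrow> 'm::ab_group_add \<Rightarrow> 'm) \<Rightarrow> bool" where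
  "flat_module scale \<longleftrightarrow> module scale \<and> flat_quot scale {0}"

definition finitely_generated :: "('a::comm_ring_1 \<Rightarrow> 'm::ab_group_add \<Rightarrow> 'm) \<Rightarrow> bool" where
  "finitely_generated scale \<longleftrightarrow> (\<exists>S. finite S \<and> module.span scale S = UNIV)"

definition annihilator :: "('a::comm_ring_1 \<Rightarrow> 'm::ab_group_add \<Rightarrow> 'm) \<Rightarrow> 'a set" where
  "annihilator scale = {r. \<forall>m. scale r m = 0}"

definition pure_ideal :: "'a::comm_ring_1 set \<Rightarrow> bool" where
  "pure_ideal I \<longleftrightarrow> ideal I \<and> flat_quot ((*) :: 'a \<Rightarrow> 'a \<Rightarrow> 'a) I"

end

theory Submission
  imports Defs
begin


lemma module_mult: "module ((*) :: 'a::comm_ring_1 \<Rightarrow> 'a \<Rightarrow> 'a)"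
  by unfold_locales (simp_all add: algebra_simps)

lemma ideal_iff: "ideal (J :: 'a::comm_ring_1 set) \<longleftrightarrow>
    0 \<in> J \<and> (\<forall>x\<in>J. \<forall>y\<in>J. x + y \<in> J) \<and> (\<forall>c. \<forall>x\<in>J. c * x \<in> J)"
  unfolding ideal_def module.subspace_def[OF module_mult] ..

lemma ideal_props:
  assumes "ideal (J :: 'a::comm_ring_1 set)"
  shows "0 \<in> J" "\<And>a b. a \<in> J \<Longrightarrow> b \<in> J \<Longrightarrow> a + b \<in> J" "\<And>r a. a \<in> J \<Longrightarrow> r * a \<in> J"
  using assms unfolding ideal_iff by auto

lemma rel_add:
  "a \<in> tensor_rel J s K \<Longrightarrow> b \<in> tensor_rel J s K \<Longrightarrow> (\<lambda>q. a q + b q) \<in> tensor_rel J s K"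
proof -
  assume a: "a \<in> tensor_rel J s K" and b: "b \<in> tensor_rel J s K"
  have "(\<lambda>q. a q - ((\<lambda>_. 0) q - b q)) \<in> tensor_rel J s K"
    by (intro tensor_rel.diff tensor_rel.zero a b)
  then show ?thesis by simp
qed

lemma rel_gen1:
  "j \<in> J \<Longrightarrow> j' \<in> J \<Longrightarrow> (\<lambda>q. delta (j + j', m) q - delta (j, m) q - delta (j', m) q) \<in> tensor_rel J s K"
  by (rule tensor_rel.gen) (unfold tensor_gens_def, blast)

lemma rel_gen3:
  "j \<in> J \<Longrightarrow> (\<lambda>q. delta (r * j, m) q - delta (j, s r m) q) \<in> tensor_rel J s K"
  by (rule tensor_rel.gen) (unfold tensor_gens_def, blast)

lemma rel_gen4:
  "j \<in> J \<Longrightarrow> k \<in> K \<Longrightarrow> delta (j, k) \<in> tensor_rel J s K"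
  by (rule tensor_rel.gen) (unfold tensor_gens_def, blast)

lemma rel_eq: "f \<in> tensor_rel J s K \<Longrightarrow> f = g \<Longrightarrow> g \<in> tensor_rel J s K"
  by simp

lemma rel_intmult:
  fixes J :: "'a::comm_ring_1 set"
  assumes J: "ideal J" and z: "z \<in> J"
  shows "(\<lambda>q. n * delta (z, m) q - delta (of_int n * z, m) q) \<in> tensor_rel J s K"
proof (induct n rule: int_induct[where k=0])
  case base
  have "(\<lambda>q. delta (0 + 0, m) q - delta (0, m) q - delta (0, m) q) \<in> tensor_rel J s K"
    using ideal_props[OF J] by (intro rel_gen1) auto
  then show ?case by (rule rel_eq) simp
next
  case (step1 i)
  have "(\<lambda>q. (i * delta (z, m) q - delta (of_int i * z, m) q)
       - (delta (of_int i * z + z, m) q - delta (of_int i * z, m) q - delta (z, m) q)) \<in> tensor_rel J s K"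
  proof (rule tensor_rel.diff[OF step1(2)])
    show "(\<lambda>q. delta (of_int i * z + z, m) q - delta (of_int i * z, m) q - delta (z, m) q) \<in> tensor_rel J s K"
      using ideal_props[OF J] z by (intro rel_gen1) auto
  qed
  then show ?case by (rule rel_eq) (simp add: fun_eq_iff algebra_simps)
next
  case (step2 i)
  have "(\<lambda>q. (i * delta (z, m) q - delta (of_int i * z, m) q)
       + (delta (of_int (i - 1) * z + z, m) q - delta (of_int (i - 1) * z, m) q - delta (z, m) q)) \<in> tensor_rel J s K"
  proof (rule rel_add[OF step2(2)])
    show "(\<lambda>q. delta (of_int (i - 1) * z + z, m) q - delta (of_int (i - 1) * z, m) q - delta (z, m) q) \<in> tensor_rel J s K"
      using ideal_props[OF J] z by (intro rel_gen1) auto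
  qed
  then show ?case by (rule rel_eq) (simp add: fun_eq_iff algebra_simps)
qed

lemma ideal_sum:
  assumes J: "ideal J" and "\<And>x. x \<in> B \<Longrightarrow> f x \<in> J"
  shows "sum f B \<in> (J :: 'a::comm_ring_1 set)"
  using module.subspace_sum[OF module_mult, of J B f] J assms(2) unfolding ideal_def by blast

lemma rel_reduce:
  fixes J I :: "'a::comm_ring_1 set"
  assumes J: "ideal J" and S: "finite S"
  shows "\<forall>f. S \<subseteq> J \<times> UNIV \<longrightarrow> {p. f p \<noteq> 0} \<subseteq> S \<longrightarrow>
     (\<lambda>q. f q - delta (\<Sum>p\<in>S. of_int (f p) * fst p * snd p, 1) q) \<in> tensor_rel J (*) I"
  using S
proof (induction S rule: finite_induct)
  case empty
  show ?case
  proof (intro allI impI)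
    fix f :: "'a \<times> 'a \<Rightarrow> int" assume "{p. f p \<noteq> 0} \<subseteq> {}"
    then have f0: "\<And>q. f q = 0" by auto
    have "(\<lambda>q. delta (0 + 0, 1) q - delta (0, 1) q - delta (0, 1) q) \<in> tensor_rel J (*) I"
      using ideal_props[OF J] by (intro rel_gen1) auto
    then show "(\<lambda>q. f q - delta (\<Sum>p\<in>{}. of_int (f p) * fst p * snd p, 1) q) \<in> tensor_rel J (*) I"
      by (rule rel_eq) (simp add: f0 fun_eq_iff)
  qed
next
  case (insert p0 S)
  show ?case
  proof (intro allI impI)
    fix f :: "'a \<times> 'a \<Rightarrow> int"
    assume SJ: "insert p0 S \<subseteq> J \<times> UNIV" and sf: "{p. f p \<noteq> 0} \<subseteq> insert p0 S"
    obtain j0 m0 where p0: "p0 = (j0, m0)" by (cases p0)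
    have j0: "j0 \<in> J" using SJ p0 by auto
    define f' where "f' = f(p0 := 0)"
    define n where "n = f p0"
    define e where "e = (\<Sum>p\<in>S. of_int (f p) * fst p * snd p)"
    define w where "w = m0 * (of_int n * j0)"
    have e': "(\<Sum>p\<in>S. of_int (f' p) * fst p * snd p) = e"
      unfolding e_def f'_def using insert.hyps(2) by (intro sum.cong) auto
    have sf': "{p. f' p \<noteq> 0} \<subseteq> S" using sf unfolding f'_def by auto
    have IH: "(\<lambda>q. f' q - delta (e, 1) q) \<in> tensor_rel J (*) I"
      using insert.IH[rule_format, OF _ sf'] SJ e' by simp
    have eJ: "e \<in> J" unfolding e_def
    proof (rule ideal_sum[OF J])
      fix p assume "p \<in> S"
      then have "fst p \<in> J" using SJ by auto
      then have "(snd p * of_int (f p)) * fst p \<in> J" using ideal_props(3)[OF J] by blast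
      then show "of_int (f p) * fst p * snd p \<in> J" by (simp add: ac_simps)
    qed
    have nj0: "of_int n * j0 \<in> J" using ideal_props(3)[OF J j0] .
    have wJ: "w \<in> J" unfolding w_def using ideal_props(3)[OF J nj0] .
    have E: "(\<Sum>p\<in>insert p0 S. of_int (f p) * fst p * snd p) = w + e"
      using insert.hyps unfolding w_def e_def n_def p0 by (simp add: algebra_simps)
    have fq: "\<And>q. f q = f' q + n * delta (j0, m0) q" unfolding f'_def n_def p0 delta_def by auto
    have A: "(\<lambda>q. n * delta (j0, m0) q - delta (of_int n * j0, m0) q) \<in> tensor_rel J (*) I"
      by (rule rel_intmult[OF J j0])
    have B: "(\<lambda>q. delta (m0 * (of_int n * j0), 1) q - delta (of_int n * j0, m0 * 1) q) \<in> tensor_rel J (*) I"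
      by (rule rel_gen3[OF nj0])
    have C: "(\<lambda>q. delta (w + e, 1) q - delta (w, 1) q - delta (e, 1) q) \<in> tensor_rel J (*) I"
      by (rule rel_gen1[OF wJ eJ])
    have "(\<lambda>q. (f' q - delta (e, 1) q + (n * delta (j0, m0) q - delta (of_int n * j0, m0) q))
        - (delta (m0 * (of_int n * j0), 1) q - delta (of_int n * j0, m0 * 1) q)
        - (delta (w + e, 1) q - delta (w, 1) q - delta (e, 1) q)) \<in> tensor_rel J (*) I"
      by (intro tensor_rel.diff rel_add[OF IH A] B C)
    then show "(\<lambda>q. f q - delta (\<Sum>p\<in>insert p0 S. of_int (f p) * fst p * snd p, 1) q) \<in> tensor_rel J (*) I"
      unfolding E by (rule rel_eq) (simp add: fun_eq_iff fq w_def)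
  qed
qed

lemma pure_from_idem:
  fixes I :: "'a::comm_ring_1 set"
  assumes idI: "ideal I" and idem: "\<And>z. z \<in> I \<Longrightarrow> \<exists>y\<in>I. z * y = z"
  shows "pure_ideal I"
  unfolding pure_ideal_def flat_quot_def
proof (intro conjI idI allI impI)
  fix J :: "'a set" and f :: "'a \<times> 'a \<Rightarrow> int"
  assume J: "ideal J"
    and hf: "finite {p. f p \<noteq> 0} \<and> {p. f p \<noteq> 0} \<subseteq> J \<times> UNIV \<and> tensor_eval (*) f \<in> I"
  define z where "z = tensor_eval (*) f"
  have zdef: "z = (\<Sum>p\<in>{p. f p \<noteq> 0}. of_int (f p) * fst p * snd p)"
    unfolding z_def tensor_eval_def by simp
  have red: "(\<lambda>q. f q - delta (z, 1) q) \<in> tensor_rel J (*) I"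
    unfolding zdef using rel_reduce[OF J, of "{p. f p \<noteq> 0}" I] hf by blast
  have zJ: "z \<in> J" unfolding zdef
  proof (rule ideal_sum[OF J])
    fix p assume "p \<in> {p. f p \<noteq> 0}"
    then have "fst p \<in> J" using hf by auto
    then have "(snd p * of_int (f p)) * fst p \<in> J" using ideal_props(3)[OF J] by blast
    then show "of_int (f p) * fst p * snd p \<in> J" by (simp add: ac_simps)
  qed
  have zI: "z \<in> I" using hf z_def by simp
  obtain y where y: "y \<in> I" "z * y = z" using idem[OF zI] by blast
  have g3: "(\<lambda>q. delta (y * z, 1) q - delta (z, y * 1) q) \<in> tensor_rel J (*) I"
    by (rule rel_gen3[OF zJ])
  have g4: "delta (z, y) \<in> tensor_rel J (*) I" by (rule rel_gen4[OF zJ y(1)])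
  have "(\<lambda>q. (f q - delta (z, 1) q) + ((delta (y * z, 1) q - delta (z, y * 1) q) + delta (z, y) q)) \<in> tensor_rel J (*) I"
    by (intro rel_add red g3 g4)
  then show "f \<in> tensor_rel J (*) I"
  proof (rule rel_eq)
    have "y * z = z" using y(2) by (simp add: mult.commute)
    then show "(\<lambda>q. (f q - delta (z, 1) q) + ((delta (y * z, 1) q - delta (z, y * 1) q) + delta (z, y) q)) = f"
      by (simp add: fun_eq_iff)
  qed
qed




context module
begin

lemma nak_decomp:
  assumes A0: "0 \<in> A" and Aadd: "\<And>a b. a \<in> A \<Longrightarrow> b \<in> A \<Longrightarrow> a + b \<in> A"
    and Amul: "\<And>r a. a \<in> A \<Longrightarrow> r * a \<in> A"
    and x: "x \<in> span (X \<union> {a *s t0 | a. a \<in> A})"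
  shows "\<exists>a\<in>A. x - a *s t0 \<in> span X"
  using x
proof (induction rule: span_induct)
  case base
  show ?case
  proof (rule subspaceI)
    show "0 \<in> Collect (\<lambda>x. \<exists>a\<in>A. x - a *s t0 \<in> span X)"
      using A0 by (auto intro!: bexI[of _ 0] span_zero)
  next
    fix x y assume "x \<in> Collect (\<lambda>x. \<exists>a\<in>A. x - a *s t0 \<in> span X)"
      "y \<in> Collect (\<lambda>x. \<exists>a\<in>A. x - a *s t0 \<in> span X)"
    then obtain a b where ab: "a \<in> A" "b \<in> A" "x - a *s t0 \<in> span X" "y - b *s t0 \<in> span X" by auto
    have eq: "(x + y) - (a + b) *s t0 = (x - a *s t0) + (y - b *s t0)"
      by (simp add: algebra_simps)
    have "(x + y) - (a + b) *s t0 \<in> span X" unfolding eq using ab by (intro span_add)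
    then show "x + y \<in> Collect (\<lambda>x. \<exists>a\<in>A. x - a *s t0 \<in> span X)"
      using ab Aadd by blast
  next
    fix c x assume "x \<in> Collect (\<lambda>x. \<exists>a\<in>A. x - a *s t0 \<in> span X)"
    then obtain a where a: "a \<in> A" "x - a *s t0 \<in> span X" by auto
    have eq: "c *s x - (c * a) *s t0 = c *s (x - a *s t0)"
      by (simp add: algebra_simps)
    have "c *s x - (c * a) *s t0 \<in> span X" unfolding eq using a by (intro span_scale)
    then show "c *s x \<in> Collect (\<lambda>x. \<exists>a\<in>A. x - a *s t0 \<in> span X)"
      using a Amul by blast
  qed
next
  case (step x)
  then show ?case
  proof
    assume "x \<in> X" then show ?thesis using A0 by (auto intro!: bexI[of _ 0] span_base)
  next
    assume "x \<in> {a *s t0 | a. a \<in> A}"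
    then obtain a where "a \<in> A" "x = a *s t0" by auto
    then show ?thesis by (intro bexI[of _ a]) (auto intro: span_zero)
  qed
qed

lemma nakayama_gen:
  assumes A0: "0 \<in> A" and Aadd: "\<And>a b. a \<in> A \<Longrightarrow> b \<in> A \<Longrightarrow> a + b \<in> A"
    and Amul: "\<And>r a. a \<in> A \<Longrightarrow> r * a \<in> A"
    and T: "finite T"
  shows "\<forall>W. subspace W \<longrightarrow> (\<forall>t\<in>T. t \<in> span (W \<union> {a *s s | a s. a \<in> A \<and> s \<in> T}))
           \<longrightarrow> (\<exists>a\<in>A. \<forall>t\<in>T. (1 - a) *s t \<in> W)"
  using T
proof (induction T rule: finite_induct)
  case empty
  then show ?case using A0 by auto
next
  case (insert t0 T)
  have Asub: "a - b \<in> A" if "a \<in> A" "b \<in> A" for a b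
    using Aadd[OF that(1) Amul[OF that(2), of "-1"]] by simp
  show ?case
  proof (intro allI impI)
    fix W assume W: "subspace W"
      and H: "\<forall>t\<in>insert t0 T. t \<in> span (W \<union> {a *s s | a s. a \<in> A \<and> s \<in> insert t0 T})"
    define GT where "GT = {a *s s | a s. a \<in> A \<and> s \<in> T}"
    have G: "W \<union> {a *s s | a s. a \<in> A \<and> s \<in> insert t0 T} = (W \<union> GT) \<union> {a *s t0 | a. a \<in> A}"
      unfolding GT_def by auto
    have dec: "\<exists>a\<in>A. t - a *s t0 \<in> span (W \<union> GT)" if "t \<in> insert t0 T" for t
    proof -
      have "t \<in> span ((W \<union> GT) \<union> {a *s t0 | a. a \<in> A})" using H[rule_format, OF that] unfolding G .
      then show ?thesis using nak_decomp[OF A0 Aadd Amul] by blast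
    qed
    define W' where "W' = span (insert t0 W)"
    have W'sub: "subspace W'" unfolding W'_def by simp
    have W'mem: "y \<in> W' \<longleftrightarrow> (\<exists>k. y - k *s t0 \<in> W)" for y
    proof -
      have sw: "span W = W" using span_eq_iff W by blast
      show ?thesis unfolding W'_def span_breakdown_eq sw ..
    qed
    have "\<forall>t\<in>T. t \<in> span (W' \<union> GT)"
    proof
      fix t assume t: "t \<in> T"
      then obtain a where a: "a \<in> A" "t - a *s t0 \<in> span (W \<union> GT)" using dec by auto
      have "span (W \<union> GT) \<subseteq> span (W' \<union> GT)"
        by (rule span_mono) (auto simp: W'_def intro: span_base)
      moreover have "a *s t0 \<in> span (W' \<union> GT)"
      proof -
        have "a *s t0 \<in> W'" unfolding W'_def by (intro span_scale span_base) simp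
        then show ?thesis using span_superset by blast
      qed
      ultimately have "(t - a *s t0) + a *s t0 \<in> span (W' \<union> GT)"
        using a by (blast intro: span_add)
      then show "t \<in> span (W' \<union> GT)" by simp
    qed
    with insert.IH W'sub obtain a where a: "a \<in> A" "\<forall>t\<in>T. (1 - a) *s t \<in> W'"
      unfolding GT_def by blast
    obtain a0 where a0: "a0 \<in> A" "t0 - a0 *s t0 \<in> span (W \<union> GT)" using dec by auto
    have key: "\<exists>b\<in>A. (1 - a) *s y - b *s t0 \<in> W" if "y \<in> span (W \<union> GT)" for y
      using that
    proof (induction rule: span_induct)
      case base
      show ?case
      proof (rule subspaceI)
        show "0 \<in> Collect (\<lambda>y. \<exists>b\<in>A. (1 - a) *s y - b *s t0 \<in> W)"
          using A0 W by (auto intro!: bexI[of _ 0] subspace_0)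
      next
        fix x y assume "x \<in> Collect (\<lambda>y. \<exists>b\<in>A. (1 - a) *s y - b *s t0 \<in> W)"
          "y \<in> Collect (\<lambda>y. \<exists>b\<in>A. (1 - a) *s y - b *s t0 \<in> W)"
        then obtain b1 b2 where b: "b1 \<in> A" "b2 \<in> A" "(1 - a) *s x - b1 *s t0 \<in> W" "(1 - a) *s y - b2 *s t0 \<in> W"
          by auto
        have "(1 - a) *s (x + y) - (b1 + b2) *s t0 = ((1 - a) *s x - b1 *s t0) + ((1 - a) *s y - b2 *s t0)"
          by (simp add: algebra_simps)
        then show "x + y \<in> Collect (\<lambda>y. \<exists>b\<in>A. (1 - a) *s y - b *s t0 \<in> W)"
          using b Aadd W by (auto intro!: bexI[of _ "b1 + b2"] subspace_add)
      next
        fix c x assume "x \<in> Collect (\<lambda>y. \<exists>b\<in>A. (1 - a) *s y - b *s t0 \<in> W)"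
        then obtain b where b: "b \<in> A" "(1 - a) *s x - b *s t0 \<in> W" by auto
        have "(1 - a) *s (c *s x) - (c * b) *s t0 = c *s ((1 - a) *s x - b *s t0)"
          by (simp add: algebra_simps mult.commute)
        then show "c *s x \<in> Collect (\<lambda>y. \<exists>b\<in>A. (1 - a) *s y - b *s t0 \<in> W)"
          using b Amul W by (auto intro!: bexI[of _ "c * b"] subspace_scale)
      qed
    next
      case (step y)
      then show ?case
      proof
        assume "y \<in> W" then show ?thesis using A0 W by (auto intro!: bexI[of _ 0] subspace_scale)
      next
        assume "y \<in> GT"
        then obtain c s where cs: "c \<in> A" "s \<in> T" "y = c *s s" unfolding GT_def by auto
        then have "(1 - a) *s s \<in> W'" using a by auto
        then obtain k where k: "(1 - a) *s s - k *s t0 \<in> W" using W'mem by auto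
        have eq: "(1 - a) *s y - (k * c) *s t0 = c *s ((1 - a) *s s - k *s t0)"
          using cs by (simp add: algebra_simps mult.commute)
        have "(1 - a) *s y - (k * c) *s t0 \<in> W" unfolding eq using k W by (intro subspace_scale)
        then show ?thesis using cs Amul by blast
      qed
    qed
    from key[OF a0(2)] obtain b where b: "b \<in> A" "(1 - a) *s (t0 - a0 *s t0) - b *s t0 \<in> W" by auto
    define a2 where "a2 = a + a0 - a * a0 + b"
    have a2A: "a2 \<in> A" unfolding a2_def using a a0 b Aadd Asub Amul by auto
    have e: "(1 - a) *s (t0 - a0 *s t0) - b *s t0 = (1 - a2) *s t0"
      unfolding a2_def by (simp add: algebra_simps)
    have t0W: "(1 - a2) *s t0 \<in> W" using b e by simp
    define c where "c = a + a2 - a * a2"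
    have cA: "c \<in> A" unfolding c_def using a a2A Aadd Asub Amul by auto
    have c1: "1 - c = (1 - a2) * (1 - a)" unfolding c_def by (simp add: algebra_simps)
    show "\<exists>c\<in>A. \<forall>t\<in>insert t0 T. (1 - c) *s t \<in> W"
    proof (intro bexI[OF _ cA] ballI)
      fix t assume "t \<in> insert t0 T"
      then show "(1 - c) *s t \<in> W"
      proof
        assume "t = t0"
        have eq: "(1 - c) *s t0 = (1 - a) *s ((1 - a2) *s t0)" unfolding c1 by (simp add: mult.commute)
        show ?thesis unfolding `t = t0` eq by (rule subspace_scale[OF W t0W])
      next
        assume "t \<in> T"
        then have "(1 - a) *s t \<in> W'" using a by auto
        then obtain k where k: "(1 - a) *s t - k *s t0 \<in> W" using W'mem by auto
        have eq: "(1 - c) *s t = (1 - a2) *s ((1 - a) *s t - k *s t0) + k *s ((1 - a2) *s t0)"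
          unfolding c1 by (simp add: algebra_simps mult.commute)
        show ?thesis unfolding eq by (rule subspace_add[OF W subspace_scale[OF W k] subspace_scale[OF W t0W]])
      qed
    qed
  qed
qed

end



definition phi :: "('a::comm_ring_1 \<Rightarrow> 'm::ab_group_add \<Rightarrow> 'm) \<Rightarrow> ('a \<Rightarrow> 'a) \<Rightarrow> ('a \<times> 'm) set \<Rightarrow> ('a \<times> 'm \<Rightarrow> int) \<Rightarrow> 'm" where
  "phi scale c S f = (\<Sum>p\<in>S. scale (of_int (f p) * c (fst p)) (snd p))"

context module
begin

lemma phi_diff [simp]: "phi scale c S (\<lambda>q. f q - g q) = phi scale c S f - phi scale c S g"
  unfolding phi_def by (simp add: sum_subtractf ring_distribs scale_left_diff_distrib)

lemma phi_mono: "finite U \<Longrightarrow> S \<subseteq> U \<Longrightarrow> (\<forall>p\<in>U - S. f p = 0) \<Longrightarrow> phi scale c U f = phi scale c S f"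
  unfolding phi_def by (rule sum.mono_neutral_right) auto

lemma phi_delta [simp]: "finite U \<Longrightarrow> p \<in> U \<Longrightarrow> phi scale c U (delta p) = c (fst p) *s (snd p)"
proof -
  assume U: "finite U" "p \<in> U"
  have "(\<lambda>q. (of_int (delta p q) * c (fst q)) *s (snd q)) = (\<lambda>q. if q = p then c (fst p) *s (snd p) else 0)"
    by (auto simp: fun_eq_iff delta_def)
  then have "phi scale c U (delta p) = (\<Sum>q\<in>U. if q = p then c (fst p) *s (snd p) else 0)"
    unfolding phi_def by metis
  also have "\<dots> = c (fst p) *s (snd p)" using U by (simp add: sum.delta)
  finally show ?thesis .
qed

lemma phi_zero [simp]: "phi scale c S (\<lambda>_. 0) = 0"
  unfolding phi_def by simp

end

lemma phi_invariant:
  fixes scale :: "'a::comm_ring_1 \<Rightarrow> 'm::ab_group_add \<Rightarrow> 'm"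
  assumes mod: "module scale"
    and cJ: "\<And>j. j \<in> J \<Longrightarrow> x * c j = j"
    and Jmul: "\<And>r j. j \<in> J \<Longrightarrow> r * j \<in> J"
    and Jadd: "\<And>j j'. j \<in> J \<Longrightarrow> j' \<in> J \<Longrightarrow> j + j' \<in> J"
    and N: "N = module.span scale {scale a m | a m. x * a = 0}"
    and g: "g \<in> tensor_rel J scale {0}"
  shows "finite {p. g p \<noteq> 0} \<and> (\<forall>S. finite S \<longrightarrow> {p. g p \<noteq> 0} \<subseteq> S \<longrightarrow> phi scale c S g \<in> N)"
  using g
proof (induction rule: tensor_rel.induct)
  interpret module scale by fact
  have gen3: "finite {p. g p \<noteq> 0} \<and> (\<forall>S. finite S \<longrightarrow> {p. g p \<noteq> 0} \<subseteq> S \<longrightarrow> phi scale c S g \<in> N)"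
    if P: "finite P" "{p. g p \<noteq> 0} \<subseteq> P" and val: "\<And>U. finite U \<Longrightarrow> P \<subseteq> U \<Longrightarrow> phi scale c U g \<in> N"
    for g P
  proof
    show "finite {p. g p \<noteq> 0}" using P finite_subset by blast
    show "\<forall>S. finite S \<longrightarrow> {p. g p \<noteq> 0} \<subseteq> S \<longrightarrow> phi scale c S g \<in> N"
    proof (intro allI impI)
      fix S assume S: "finite S" "{p. g p \<noteq> 0} \<subseteq> S"
      have "phi scale c (S \<union> P) g = phi scale c S g"
        by (rule phi_mono) (use S P in auto)
      moreover have "phi scale c (S \<union> P) g \<in> N" using val S P by simp
      ultimately show "phi scale c S g \<in> N" by simp
    qed
  qed
  have subN: "subspace N" unfolding N by simp
  have inN: "scale a m \<in> N" if "x * a = 0" for a m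
    unfolding N by (rule span_base) (use that in auto)
  {
    case (gen g)
    then show ?case unfolding tensor_gens_def
    proof (elim UnE CollectE exE conjE)
      fix j j' m assume g: "g = (\<lambda>q. delta (j + j', m) q - delta (j, m) q - delta (j', m) q)"
        and j: "j \<in> J" "j' \<in> J"
      show ?thesis
      proof (rule gen3[of "{(j + j', m), (j, m), (j', m)}"])
        show "{p. g p \<noteq> 0} \<subseteq> {(j + j', m), (j, m), (j', m)}" unfolding g delta_def by auto
        fix U assume U: "finite U" "{(j + j', m), (j, m), (j', m)} \<subseteq> U"
        have "phi scale c U g = scale (c (j + j') - c j - c j') m"
          unfolding g using U by (simp add: scale_left_diff_distrib)
        moreover have "x * (c (j + j') - c j - c j') = 0"
          using cJ j Jadd by (simp add: right_diff_distrib)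
        ultimately show "phi scale c U g \<in> N" using inN by simp
      qed simp
    next
      fix j m m' assume g: "g = (\<lambda>q. delta (j, m + m') q - delta (j, m) q - delta (j, m') q)"
        and j: "j \<in> J"
      show ?thesis
      proof (rule gen3[of "{(j, m + m'), (j, m), (j, m')}"])
        show "{p. g p \<noteq> 0} \<subseteq> {(j, m + m'), (j, m), (j, m')}" unfolding g delta_def by auto
        fix U assume U: "finite U" "{(j, m + m'), (j, m), (j, m')} \<subseteq> U"
        have "phi scale c U g = 0"
          unfolding g using U by (simp add: scale_right_distrib)
        then show "phi scale c U g \<in> N" unfolding N by (simp add: span_zero)
      qed simp
    next
      fix r j m assume g: "g = (\<lambda>q. delta (r * j, m) q - delta (j, scale r m) q)"
        and j: "j \<in> J"
      show ?thesis
      proof (rule gen3[of "{(r * j, m), (j, scale r m)}"])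
        show "{p. g p \<noteq> 0} \<subseteq> {(r * j, m), (j, scale r m)}" unfolding g delta_def by auto
        fix U assume U: "finite U" "{(r * j, m), (j, scale r m)} \<subseteq> U"
        have "phi scale c U g = scale (c (r * j) - c j * r) m"
          unfolding g using U by (simp add: scale_left_diff_distrib)
        moreover have "x * (c (r * j) - c j * r) = 0"
        proof -
          have "x * (c j * r) = r * j" using cJ[OF j] by (simp add: ac_simps)
          then show ?thesis using cJ[OF Jmul[OF j, of r]] by (simp add: right_diff_distrib)
        qed
        ultimately show "phi scale c U g \<in> N" using inN by simp
      qed simp
    next
      fix j k assume g: "g = delta (j, k)" and k: "k \<in> {0}"
      show ?thesis
      proof (rule gen3[of "{(j, k)}"])
        show "{p. g p \<noteq> 0} \<subseteq> {(j, k)}" unfolding g delta_def by auto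
        fix U assume U: "finite U" "{(j, k)} \<subseteq> U"
        have "phi scale c U g = 0"
          unfolding g using U k by simp
        then show "phi scale c U g \<in> N" unfolding N by (simp add: span_zero)
      qed simp
    qed
  next
    case zero
    show ?case unfolding N by (simp add: span_zero)
  next
    case (diff f g)
    show ?case
    proof
      have sub: "{p. f p - g p \<noteq> 0} \<subseteq> {p. f p \<noteq> 0} \<union> {p. g p \<noteq> 0}" by auto
      have ff: "finite {p. f p \<noteq> 0}" and fg: "finite {p. g p \<noteq> 0}" using diff.IH by blast+
      show fin: "finite {p. f p - g p \<noteq> 0}" by (rule finite_subset[OF sub]) (use ff fg in simp)
      show "\<forall>S. finite S \<longrightarrow> {p. f p - g p \<noteq> 0} \<subseteq> S \<longrightarrow> phi scale c S (\<lambda>q. f q - g q) \<in> N"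
      proof (intro allI impI)
        fix S assume S: "finite S" "{p. f p - g p \<noteq> 0} \<subseteq> S"
        define U where "U = S \<union> {p. f p \<noteq> 0} \<union> {p. g p \<noteq> 0}"
        have U: "finite U" unfolding U_def using S(1) ff fg by simp
        have "phi scale c U (\<lambda>q. f q - g q) = phi scale c S (\<lambda>q. f q - g q)"
          by (rule phi_mono) (use U S in \<open>auto simp: U_def\<close>)
        moreover have "phi scale c U f \<in> N"
          by (rule diff.IH(1)[THEN conjunct2, rule_format, OF U]) (auto simp: U_def)
        moreover have "phi scale c U g \<in> N"
          by (rule diff.IH(2)[THEN conjunct2, rule_format, OF U]) (auto simp: U_def)
        ultimately have "phi scale c U f - phi scale c U g \<in> N" 
          using subspace_diff[OF subN] by blast
        with \<open>phi scale c U (\<lambda>q. f q - g q) = phi scale c S (\<lambda>q. f q - g q)\<close>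
        show "phi scale c S (\<lambda>q. f q - g q) \<in> N" by simp
      qed
    qed
  }
qed



lemma ann_idem:
  fixes scale :: "'a::comm_ring_1 \<Rightarrow> 'm::ab_group_add \<Rightarrow> 'm"
  assumes mod: "module scale" and fg: "finitely_generated scale" and fl: "flat_module scale"
    and x: "x \<in> annihilator scale"
  shows "\<exists>y\<in>annihilator scale. x * y = x"
proof -
  interpret module scale by fact
  have x0: "\<And>m. scale x m = 0" using x unfolding annihilator_def by auto
  define J where "J = range (\<lambda>r. x * r)"
  define c where "c = (\<lambda>j. SOME r. j = x * r)"
  have cJ: "x * c j = j" if "j \<in> J" for j
  proof -
    from that obtain r where "j = x * r" unfolding J_def by auto
    then have "j = x * c j" unfolding c_def by (rule someI)
    then show ?thesis by simp
  qed
  have Jmul: "r * j \<in> J" if "j \<in> J" for r j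
  proof -
    from that obtain s where "j = x * s" unfolding J_def by auto
    then have "r * j = x * (r * s)" by (simp add: ac_simps)
    then show ?thesis unfolding J_def by auto
  qed
  have Jadd: "j + j' \<in> J" if "j \<in> J" "j' \<in> J" for j j'
  proof -
    from that obtain s t where "j = x * s" "j' = x * t" unfolding J_def by auto
    then have "j + j' = x * (s + t)" by (simp add: distrib_left)
    then show ?thesis unfolding J_def by auto
  qed
  have xJ: "x \<in> J" unfolding J_def by (rule range_eqI[of _ _ 1]) simp
  have J0: "0 \<in> J" unfolding J_def by (rule range_eqI[of _ _ 0]) simp
  have idJ: "ideal J" unfolding ideal_iff using J0 Jadd Jmul by blast
  define N where "N = span {scale a m | a m. x * a = 0}"
  have subN: "subspace N" unfolding N_def by simp
  have inN: "scale a m \<in> N" if "x * a = 0" for a m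
    unfolding N_def by (rule span_base) (use that in auto)
  have allN: "m \<in> N" for m
  proof -
    have fq: "flat_quot scale {0}" using fl unfolding flat_module_def by simp
    have supp: "{p. delta (x, m) p \<noteq> 0} = {(x, m)}" unfolding delta_def by auto
    have te: "tensor_eval scale (delta (x, m)) = 0"
      unfolding tensor_eval_def supp by (simp add: delta_def x0)
    have FQ: "\<forall>f :: 'a \<times> 'm \<Rightarrow> int. finite {p. f p \<noteq> 0} \<and> {p. f p \<noteq> 0} \<subseteq> J \<times> UNIV
           \<and> tensor_eval scale f \<in> {0} \<longrightarrow> f \<in> tensor_rel J scale {0}"
      using fq idJ unfolding flat_quot_def by blast
    have "delta (x, m) \<in> tensor_rel J scale {0}"
      by (rule FQ[rule_format]) (simp add: supp te xJ)
    from phi_invariant[OF mod cJ Jmul Jadd N_def this]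
    have inv: "\<forall>S. finite S \<longrightarrow> {p. delta (x, m) p \<noteq> 0} \<subseteq> S \<longrightarrow> phi scale c S (delta (x, m)) \<in> N"
      by blast
    have "phi scale c {(x, m)} (delta (x, m)) \<in> N" by (rule inv[rule_format]) (simp_all add: supp)
    then have m1: "scale (c x) m \<in> N" by simp
    have "x * (c x - 1) = 0" using cJ[OF xJ] by (simp add: right_diff_distrib)
    then have m2: "scale (c x - 1) m \<in> N" by (rule inN)
    have "m = scale (c x) m - scale (c x - 1) m" by (simp add: scale_left_diff_distrib)
    then show "m \<in> N" using subspace_diff[OF subN m1 m2] by simp
  qed
  obtain S where S: "finite S" "span S = UNIV" using fg unfolding finitely_generated_def by auto
  define A where "A = {a. x * a = 0}"
  have A0: "0 \<in> A" unfolding A_def by simp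
  have Aadd: "a + b \<in> A" if "a \<in> A" "b \<in> A" for a b using that unfolding A_def by (simp add: distrib_left)
  have Amul: "r * a \<in> A" if "a \<in> A" for r a
  proof -
    have "x * a = 0" using that unfolding A_def by simp
    then have "x * (r * a) = 0" by (metis mult.left_commute mult_zero_right)
    then show ?thesis unfolding A_def by simp
  qed
  define GS where "GS = {scale a s | a s. a \<in> A \<and> s \<in> S}"
  have Nsub: "N \<subseteq> span GS"
    unfolding N_def
  proof (rule span_minimal)
    show "subspace (span GS)" by simp
    show "{scale a m | a m. x * a = 0} \<subseteq> span GS"
    proof
      fix v assume "v \<in> {scale a m | a m. x * a = 0}"
      then obtain a m where v: "v = scale a m" "x * a = 0" by auto
      have "m \<in> span S" using S by simp
      then have "\<forall>a. x * a = 0 \<longrightarrow> scale a m \<in> span GS"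
      proof (induction rule: span_induct)
        case base
        show ?case
        proof (rule subspaceI)
          show "0 \<in> Collect (\<lambda>m. \<forall>a. x * a = 0 \<longrightarrow> scale a m \<in> span GS)" by (simp add: span_zero)
        next
          fix u w assume "u \<in> Collect (\<lambda>m. \<forall>a. x * a = 0 \<longrightarrow> scale a m \<in> span GS)"
            "w \<in> Collect (\<lambda>m. \<forall>a. x * a = 0 \<longrightarrow> scale a m \<in> span GS)"
          then show "u + w \<in> Collect (\<lambda>m. \<forall>a. x * a = 0 \<longrightarrow> scale a m \<in> span GS)"
            by (simp add: scale_right_distrib span_add)
        next
          fix d u assume hu: "u \<in> Collect (\<lambda>m. \<forall>a. x * a = 0 \<longrightarrow> scale a m \<in> span GS)"
          show "scale d u \<in> Collect (\<lambda>m. \<forall>a. x * a = 0 \<longrightarrow> scale a m \<in> span GS)"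
          proof (simp only: mem_Collect_eq, intro allI impI)
            fix a assume "x * a = 0"
            then have "x * (a * d) = 0" by (metis mult.assoc mult_zero_left)
            then have "scale (a * d) u \<in> span GS" using hu by simp
            then show "scale a (scale d u) \<in> span GS" by simp
          qed
        qed
      next
        case (step s)
        show ?case
        proof (intro allI impI)
          fix a assume "x * a = 0"
          then have "scale a s \<in> GS" unfolding GS_def A_def using step by auto
          then show "scale a s \<in> span GS" by (rule span_base)
        qed
      qed
      then show "v \<in> span GS" using v by simp
    qed
  qed
  have hyp: "\<forall>t\<in>S. t \<in> span ({0} \<union> GS)"
  proof
    fix t assume "t \<in> S"
    have "t \<in> span GS" using allN Nsub by blast
    moreover have "span GS \<subseteq> span ({0} \<union> GS)" by (rule span_mono) auto
    ultimately show "t \<in> span ({0} \<union> GS)" by blast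
  qed
  have NG: "\<forall>W. subspace W \<longrightarrow> (\<forall>t\<in>S. t \<in> span (W \<union> {scale a s | a s. a \<in> A \<and> s \<in> S}))
           \<longrightarrow> (\<exists>a\<in>A. \<forall>t\<in>S. scale (1 - a) t \<in> W)"
    by (rule nakayama_gen) (use A0 Aadd Amul S(1) in auto)
  obtain a where a: "a \<in> A" "\<forall>t\<in>S. scale (1 - a) t \<in> {0}"
    using mp[OF mp[OF spec[OF NG, of "{0}"] subspace_single_0] hyp[unfolded GS_def]] by blast
  have ker: "scale (1 - a) m = 0" for m
  proof -
    have "m \<in> span S" using S by simp
    then show ?thesis
    proof (induction rule: span_induct)
      case base
      show ?case
      proof (rule subspaceI)
        show "0 \<in> Collect (\<lambda>m. scale (1 - a) m = 0)" by simp
        fix u w assume "u \<in> Collect (\<lambda>m. scale (1 - a) m = 0)" "w \<in> Collect (\<lambda>m. scale (1 - a) m = 0)"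
        then show "u + w \<in> Collect (\<lambda>m. scale (1 - a) m = 0)" by (simp add: scale_right_distrib)
      next
        fix d u assume "u \<in> Collect (\<lambda>m. scale (1 - a) m = 0)"
        then have "scale d (scale (1 - a) u) = 0" by simp
        then show "scale d u \<in> Collect (\<lambda>m. scale (1 - a) m = 0)"
          by (simp only: mem_Collect_eq scale_left_commute[of "1 - a" d])
      qed
    next
      case (step s)
      then show ?case using a by auto
    qed
  qed
  show ?thesis
  proof (rule bexI[of _ "1 - a"])
    show "1 - a \<in> annihilator scale" unfolding annihilator_def using ker by simp
    show "x * (1 - a) = x" using a unfolding A_def by (simp add: right_diff_distrib)
  qed
qed

theorem corollary2p3:
  fixes scale :: "'a::comm_ring_1 \<Rightarrow> 'm::ab_group_add \<Rightarrow> 'm"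
  assumes "module scale"
    and "finitely_generated scale"
    and "flat_module scale"
  shows "pure_ideal (annihilator scale)"
proof (rule pure_from_idem)
  interpret module scale by fact
  show "ideal (annihilator scale)" unfolding ideal_iff annihilator_def
  proof (intro conjI ballI allI)
    show "0 \<in> {r. \<forall>m. scale r m = 0}" by simp
    fix u w assume "u \<in> {r. \<forall>m. scale r m = 0}" "w \<in> {r. \<forall>m. scale r m = 0}"
    then show "u + w \<in> {r. \<forall>m. scale r m = 0}" by (simp add: scale_left_distrib)
  next
    fix d u assume u: "u \<in> {r. \<forall>m. scale r m = 0}"
    show "d * u \<in> {r. \<forall>m. scale r m = 0}"
    proof (simp only: mem_Collect_eq, intro allI)
      fix m
      have "scale (d * u) m = scale d (scale u m)" by simp
      also have "\<dots> = 0" using u by simp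
      finally show "scale (d * u) m = 0" .
    qed
  qed
  show "\<And>z. z \<in> annihilator scale \<Longrightarrow> \<exists>y\<in>annihilator scale. z * y = z"
    by (rule ann_idem[OF assms])
qed

end
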